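(* Let $\mathcal{R}_0>0$ and let $\kappa:[0,1]\to[0,\infty)$ be a non-decreasing function with $\kappa(0)=0$. Consider the initial value problem \[ \frac{ds}{d\tau}=-\mathcal{R}_0\frac{1}{1+\kappa(i)}\,s\,i,\qquad \frac{di}{d\tau}=\Big(\mathcal{R}_0\frac{1}{1+\kappa(i)}\,s-1\Big)i, \] with initial conditions $s(0)=s_0\ge 0$, $i(0)=i_0>0$, $s_0+i_0=1$ (initial recovered fraction $r_0=0$), satisfying $s_0\mathcal{R}_0>1+\kappa(i_0)$, with non-negative solution $(s(\tau),i(\tau))$ converging to a disease-free equilibrium $(\bar s,0)$. Let $(s^0(\tau),i^0(\tau))$ be the solution of the same initial value problem with $\kappa\equiv0$ (the classical SIR model $ds/d\tau=-\mathcal{R}_0 s i$, $di/d\tau=(\mathcal{R}_0 s-1)i$), converging to the equilibrium $(\bar s^0,0)$. Then $\bar s\ge \bar s^0$.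
   Context: This is the non-dimensional "feedback SIR" (fSIR) model: $s$ and $i$ are the fractions of susceptible and infected individuals, $r=1-s-i$ the recovered fraction, $\tau$ is rescaled time, $\mathcal{R}_0$ the basic reproduction number, and $\kappa(i)$ the "mitigation function" with $\mathcal{R}(i)=\mathcal{R}_0/(1+\kappa(i))$. The equilibrium susceptible fraction is $\bar s=\lim_{\tau\to\infty}s(\tau)$. *)

theory Defs
  imports "HOL-Analysis.Analysis"
begin

end

theory Submission imports Defs begin

lemma wat:
  fixes f :: "real \<Rightarrow> real"
  assumes "(f has_real_derivative D) (at t within {0..})" "t > 0"
  shows "(f has_real_derivative D) (at t)"
proof -
  have "t \<in> interior {0..}" using assms(2) by simp
  then have "at t within {0..} = at t" by (rule at_within_interior)
  with assms(1) show ?thesis by simp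
qed

lemma wcont:
  fixes f :: "real \<Rightarrow> real"
  assumes "\<forall>t\<ge>0. (f has_real_derivative f' t) (at t within {0..})"
  shows "continuous_on {0..} f"
  using assms by (auto simp: continuous_on_eq_continuous_within intro: DERIV_continuous)

lemma wmono:
  fixes f :: "real \<Rightarrow> real"
  assumes "\<forall>t\<ge>0. (f has_real_derivative f' t) (at t within {0..})"
    "\<forall>t\<ge>0. f' t \<ge> 0" "0 \<le> a" "a \<le> b"
  shows "f a \<le> f b"
proof (rule DERIV_nonneg_imp_increasing_open[OF assms(4)])
  fix x assume "a < x" "x < b"
  then show "\<exists>y. DERIV f x :> y \<and> y \<ge> 0"
    using assms wat[of f "f' x" x] by (intro exI[of _ "f' x"]) auto
next
  show "continuous_on {a..b} f"
    by (rule continuous_on_subset[OF wcont[OF assms(1)]]) (use assms(3) in auto)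
qed

lemma g_inc:
  fixes R0 x y :: real
  assumes "R0 > 0" "0 \<le> x" "x < y" "y \<le> 1/R0"
  shows "x * exp (-R0*x) < y * exp (-R0*y)"
proof (rule DERIV_pos_imp_increasing_open[OF assms(3)])
  fix z assume z: "x < z" "z < y"
  have "DERIV (\<lambda>x. x * exp (-R0*x)) z :> exp(-R0*z) * (1 - R0*z)"
    by (auto intro!: derivative_eq_intros simp: algebra_simps)
  moreover have "R0*z < 1"
  proof -
    have "R0*z < R0*y" using z assms by simp
    moreover have "R0*y \<le> 1" using assms by (simp add: field_simps)
    ultimately show ?thesis by linarith
  qed
  ultimately show "\<exists>d. DERIV (\<lambda>x. x * exp (-R0*x)) z :> d \<and> d > 0" by auto
qed (auto intro!: continuous_intros)

lemma g_dec:
  fixes R0 x y :: real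
  assumes "R0 > 0" "1/R0 \<le> x" "x < y"
  shows "x * exp (-R0*x) > y * exp (-R0*y)"
proof (rule DERIV_neg_imp_decreasing_open[OF assms(3)])
  fix z assume z: "x < z" "z < y"
  have "DERIV (\<lambda>x. x * exp (-R0*x)) z :> exp(-R0*z) * (1 - R0*z)"
    by (auto intro!: derivative_eq_intros simp: algebra_simps)
  moreover have "R0*z > 1"
  proof -
    have "R0*x < R0*z" using z assms by simp
    moreover have "R0*x \<ge> 1" using assms by (simp add: field_simps)
    ultimately show ?thesis by linarith
  qed
  ultimately show "\<exists>d. DERIV (\<lambda>x. x * exp (-R0*x)) z :> d \<and> d < 0"
    by (intro exI[of _ "exp(-R0*z) * (1 - R0*z)"]) (auto simp: mult_pos_neg)
qed (auto intro!: continuous_intros)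

lemma alg:
  fixes R0 K S I E :: real
  assumes "K \<ge> 0"
  shows "(- R0 * (1 / (1 + K)) * S * I) * E + S * (E * (-R0 * ((- R0 * (1 / (1 + K)) * S * I) + ((R0 * (1 / (1 + K)) * S - 1) * I)))) = E * (R0 * S * I * (K / (1 + K)))"
proof -
  have "1 + K \<noteq> 0" using assms by simp
  define a where "a = 1 / (1 + K)"
  have inner: "(- R0 * a * S * I) + ((R0 * a * S - 1) * I) = - I" by (simp add: algebra_simps)
  have a1: "1 - a = K / (1 + K)" unfolding a_def using \<open>1 + K \<noteq> 0\<close> by (simp add: field_simps)
  have "(- R0 * a * S * I) * E + S * (E * (-R0 * ((- R0 * a * S * I) + ((R0 * a * S - 1) * I)))) = E * (R0 * S * I * (1 - a))"
    unfolding inner by (simp add: algebra_simps)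
  then have "(- R0 * a * S * I) * E + S * (E * (-R0 * ((- R0 * a * S * I) + ((R0 * a * S - 1) * I)))) = E * (R0 * S * I * (K / (1 + K)))"
    by (simp only: a1)
  then show ?thesis unfolding a_def .
qed

theorem corollary1:
  fixes R0 s0 i0 sbar sbar0 :: real
    and kappa s i sc ic :: "real \<Rightarrow> real"
  assumes R0_pos: "R0 > 0"
    and kappa_nonneg: "\<forall>x\<in>{0..1}. kappa x \<ge> 0"
    and kappa_mono: "mono_on {0..1} kappa"
    and kappa0: "kappa 0 = 0"
    and s0_nonneg: "s0 \<ge> 0" and i0_pos: "i0 > 0" and sum1: "s0 + i0 = 1"
    and outbreak: "s0 * R0 > 1 + kappa i0"
    and s_ode: "\<forall>t\<ge>0. (s has_real_derivative (- R0 * (1 / (1 + kappa (i t))) * s t * i t)) (at t within {0..})"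
    and i_ode: "\<forall>t\<ge>0. (i has_real_derivative ((R0 * (1 / (1 + kappa (i t))) * s t - 1) * i t)) (at t within {0..})"
    and s_init: "s 0 = s0" and i_init: "i 0 = i0"
    and nonneg: "\<forall>t\<ge>0. s t \<ge> 0 \<and> i t \<ge> 0"
    and s_lim: "(s \<longlongrightarrow> sbar) at_top" and i_lim: "(i \<longlongrightarrow> 0) at_top"
    and sc_ode: "\<forall>t\<ge>0. (sc has_real_derivative (- R0 * sc t * ic t)) (at t within {0..})"
    and ic_ode: "\<forall>t\<ge>0. (ic has_real_derivative ((R0 * sc t - 1) * ic t)) (at t within {0..})"
    and sc_init: "sc 0 = s0" and ic_init: "ic 0 = i0"
    and sc_lim: "(sc \<longlongrightarrow> sbar0) at_top" and ic_lim: "(ic \<longlongrightarrow> 0) at_top"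
  shows "sbar \<ge> sbar0"
proof -
  let ?g = "\<lambda>x::real. x * exp (-R0*x)"
  define c where "c = s0 * exp (-R0)"
  have kap: "kappa x \<ge> 0" if "0 \<le> x" "x \<le> 1" for x using kappa_nonneg that by auto
  have i0le: "i0 \<le> 1" using sum1 s0_nonneg by linarith
  have s0R0: "s0 * R0 > 1" using outbreak kap[of i0] i0_pos i0le by linarith
  have s0pos: "s0 > 0"
  proof (rule ccontr)
    assume "\<not> s0 > 0"
    then have "s0 = 0" using s0_nonneg by simp
    with s0R0 show False by simp
  qed
  have s0big: "s0 > 1/R0" using s0R0 R0_pos by (simp add: field_simps)
  have cpos: "c > 0" using s0pos by (simp add: c_def)
  have c_lt: "c < ?g s0"
  proof -
    have "-R0* s0 + -R0*i0 = -R0*(s0+i0)" by (simp add: algebra_simps)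
    then have "-R0* s0 + -R0*i0 = -R0" using sum1 by simp
    then have "exp (-R0) = exp (-R0* s0) * exp (-R0*i0)" by (metis exp_add)
    then have "c = ?g s0 * exp (-R0*i0)" by (simp add: c_def)
    moreover have "exp (-R0*i0) < 1" using R0_pos i0_pos by simp
    moreover have "?g s0 > 0" using s0pos by simp
    ultimately show ?thesis using mult_strict_left_mono[of "exp (-R0*i0)" 1 "?g s0"] by simp
  qed
  define Hc where "Hc = (\<lambda>t. sc t * exp (-R0*(sc t + ic t)))"
  have Hc_der: "(Hc has_real_derivative 0) (at t within {0..})" if "t \<in> {0..}" for t
  proof -
    have "(Hc has_real_derivative
        (- R0 * sc t * ic t) * exp (-R0*(sc t + ic t)) + sc t * (exp (-R0*(sc t + ic t)) * (-R0 * ((- R0 * sc t * ic t) + ((R0 * sc t - 1) * ic t)))))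
        (at t within {0..})"
      unfolding Hc_def using sc_ode ic_ode that
      by (auto intro!: derivative_eq_intros)
    moreover have "(- R0 * sc t * ic t) * exp (-R0*(sc t + ic t)) + sc t * (exp (-R0*(sc t + ic t)) * (-R0 * ((- R0 * sc t * ic t) + ((R0 * sc t - 1) * ic t)))) = 0"
      by (simp add: algebra_simps)
    ultimately show ?thesis by simp
  qed
  obtain cc where "\<forall>x\<in>{0..}. Hc x = cc"
    using has_field_derivative_zero_constant[of "{0::real..}" Hc] Hc_der by auto
  then have Hc_const: "Hc t = c" if "t \<ge> 0" for t
    using that sc_init ic_init sum1 by (force simp: Hc_def c_def)
  have "(Hc \<longlongrightarrow> sbar0 * exp (-R0*(sbar0 + 0))) at_top"
    unfolding Hc_def by (intro tendsto_intros sc_lim ic_lim)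
  moreover have "(Hc \<longlongrightarrow> c) at_top"
    by (rule Lim_transform_eventually[of "\<lambda>_. c"]) (auto simp: eventually_at_top_linorder Hc_const intro!: exI[of _ 0])
  ultimately have gsbar0: "?g sbar0 = c" using tendsto_unique[OF trivial_limit_at_top_linorder] by fastforce
  have sbar0_pos: "sbar0 > 0"
  proof (rule ccontr)
    assume "\<not> sbar0 > 0"
    then have "?g sbar0 \<le> 0" by (simp add: mult_nonpos_nonneg)
    with gsbar0 cpos show False by simp
  qed
  have sbar0_le: "sbar0 \<le> 1/R0"
  proof (rule ccontr)
    assume "\<not> sbar0 \<le> 1/R0"
    then have big: "sbar0 > 1/R0" by simp
    show False
    proof (cases "sbar0 \<le> s0")
      case True
      then have "?g sbar0 \<ge> ?g s0" using g_dec[OF R0_pos, of sbar0 s0] big by (cases "sbar0 = s0") auto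
      with gsbar0 c_lt show False by simp
    next
      case False
      define m where "m = (s0 + sbar0)/2"
      have m: "s0 < m" "m < sbar0" using False by (auto simp: m_def)
      have "eventually (\<lambda>t. sc t > m) at_top"
        using order_tendstoD(1)[OF sc_lim m(2)] .
      then obtain N where N: "\<And>t. t \<ge> N \<Longrightarrow> sc t > m" by (auto simp: eventually_at_top_linorder)
      define S where "S = {0..} \<inter> sc -` {m..}"
      have "max N 0 \<in> S" using N[of "max N 0"] by (simp add: S_def)
      then have Sne: "S \<noteq> {}" by blast
      have Sbdd: "bdd_below S" by (auto simp: S_def bdd_below_def)
      have Scl: "closed S" unfolding S_def
        by (rule continuous_closed_preimage[OF wcont[OF sc_ode]]) auto
      define ts where "ts = Inf S"
      have tsS: "ts \<in> S" unfolding ts_def by (rule closed_contains_Inf[OF Sne Sbdd Scl])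
      then have ts0: "ts \<ge> 0" and scts: "sc ts \<ge> m" by (auto simp: S_def)
      have below: "sc t < m" if "0 \<le> t" "t < ts" for t
      proof (rule ccontr)
        assume "\<not> sc t < m"
        then have "t \<in> S" using that by (auto simp: S_def)
        then have "ts \<le> t" unfolding ts_def by (rule cInf_lower[OF _ Sbdd])
        with that show False by simp
      qed
      have tspos: "ts > 0"
      proof (rule ccontr)
        assume "\<not> ts > 0"
        then have "ts = 0" using ts0 by simp
        with scts sc_init m show False by simp
      qed
      have der: "DERIV sc ts :> - R0 * sc ts * ic ts"
        using wat[of sc _ ts] sc_ode ts0 tspos by blast
      have "\<not> (- R0 * sc ts * ic ts < 0)"
      proof
        assume "- R0 * sc ts * ic ts < 0"
        from DERIV_neg_dec_left[OF der this] obtain d where d: "d > 0" "\<And>h. h > 0 \<Longrightarrow> h < d \<Longrightarrow> sc ts < sc (ts - h)" by blast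
        define h where "h = min (d/2) (ts/2)"
        have "sc ts < sc (ts - h)" using d tspos by (auto simp: h_def)
        moreover have "sc (ts - h) < m" using d tspos by (intro below) (auto simp: h_def)
        ultimately show False using scts by simp
      qed
      then have "R0 * sc ts * ic ts \<le> 0" by simp
      moreover have "R0 * sc ts > 0" using R0_pos scts m s0pos by simp
      ultimately have icneg: "ic ts \<le> 0"
        using mult_pos_pos[of "R0 * sc ts" "ic ts"] by (metis not_le)
      have "?g (sc ts) \<le> Hc ts"
        unfolding Hc_def using icneg scts m s0pos R0_pos
        by (intro mult_left_mono) (auto simp: mult_nonpos_nonneg)
      then have "?g (sc ts) \<le> c" using Hc_const ts0 by simp
      moreover have "sc ts \<le> m"
      proof -
        have "isCont sc ts" using der by (rule DERIV_isCont)
        then have lim: "(sc \<longlongrightarrow> sc ts) (at_left ts)" by (simp add: isCont_def filterlim_at_split)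
        have ev: "eventually (\<lambda>t. sc t \<le> m) (at_left ts)"
          using eventually_at_left_real[OF tspos] by eventually_elim (auto intro: less_imp_le below)
        show ?thesis by (rule tendsto_upperbound[OF lim ev]) simp
      qed
      then have "sc ts = m" using scts by simp
      moreover have "?g m > ?g sbar0" using g_dec[OF R0_pos, of m sbar0] m s0big by simp
      ultimately show False using gsbar0 by simp
    qed
  qed
  have sumle: "s t + i t \<le> 1" if "t \<ge> 0" for t
  proof -
    have "-(s 0 + i 0) \<le> -(s t + i t)"
      using wmono[of "\<lambda>t. -(s t + i t)" "\<lambda>t. i t" 0 t] that
    proof -
      have "\<forall>t\<ge>0. ((\<lambda>t. -(s t + i t)) has_real_derivative i t) (at t within {0..})"
      proof (intro allI impI)
        fix t :: real assume "t \<ge> 0"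
        then have "((\<lambda>t. -(s t + i t)) has_real_derivative -((- R0 * (1 / (1 + kappa (i t))) * s t * i t) + ((R0 * (1 / (1 + kappa (i t))) * s t - 1) * i t))) (at t within {0..})"
          using s_ode i_ode by (auto intro!: derivative_eq_intros)
        then show "((\<lambda>t. -(s t + i t)) has_real_derivative i t) (at t within {0..})"
          by (simp add: algebra_simps)
      qed
      then show ?thesis using wmono[of "\<lambda>t. -(s t + i t)" "\<lambda>t. i t" 0 t] that nonneg by auto
    qed
    then show ?thesis using s_init i_init sum1 by simp
  qed
  define H where "H = (\<lambda>t. s t * exp (-R0*(s t + i t)))"
  have Hmono: "H 0 \<le> H t" if "t \<ge> 0" for t
  proof -
    define D where "D = (\<lambda>t. exp (-R0*(s t + i t)) * (R0 * s t * i t * (kappa (i t) / (1 + kappa (i t)))))"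
    have "\<forall>t\<ge>0. (H has_real_derivative D t) (at t within {0..})"
    proof (intro allI impI)
      fix t :: real assume t: "t \<ge> 0"
      have k: "kappa (i t) \<ge> 0" using kap[of "i t"] nonneg sumle[OF t] t by force
      have "(H has_real_derivative
        (- R0 * (1 / (1 + kappa (i t))) * s t * i t) * exp (-R0*(s t + i t)) + s t * (exp (-R0*(s t + i t)) * (-R0 * ((- R0 * (1 / (1 + kappa (i t))) * s t * i t) + ((R0 * (1 / (1 + kappa (i t))) * s t - 1) * i t)))))
        (at t within {0..})"
        unfolding H_def using s_ode i_ode t by (auto intro!: derivative_eq_intros)
      moreover have "(- R0 * (1 / (1 + kappa (i t))) * s t * i t) * exp (-R0*(s t + i t)) + s t * (exp (-R0*(s t + i t)) * (-R0 * ((- R0 * (1 / (1 + kappa (i t))) * s t * i t) + ((R0 * (1 / (1 + kappa (i t))) * s t - 1) * i t)))) = D t"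
        using alg[OF k] unfolding D_def by simp
      ultimately show "(H has_real_derivative D t) (at t within {0..})" by simp
    qed
    moreover have "\<forall>t\<ge>0. D t \<ge> 0"
    proof (intro allI impI)
      fix t :: real assume t: "t \<ge> 0"
      have k: "kappa (i t) \<ge> 0" using kap[of "i t"] nonneg sumle[OF t] t by force
      show "D t \<ge> 0" unfolding D_def using k nonneg t R0_pos by (auto intro!: mult_nonneg_nonneg divide_nonneg_pos)
    qed
    ultimately show ?thesis using wmono[of H D 0 t] that by auto
  qed
  have H0: "H 0 = c" using s_init i_init sum1 by (simp add: H_def c_def)
  have "(H \<longlongrightarrow> sbar * exp (-R0*(sbar + 0))) at_top"
    unfolding H_def by (intro tendsto_intros s_lim i_lim)
  then have "(H \<longlongrightarrow> ?g sbar) at_top" by simp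
  then have gsbar: "?g sbar \<ge> c"
    by (rule tendsto_lowerbound) (auto simp: eventually_at_top_linorder H0[symmetric] intro!: exI[of _ 0] Hmono)
  have sbar_nn: "sbar \<ge> 0"
    by (rule tendsto_lowerbound[OF s_lim]) (auto simp: eventually_at_top_linorder nonneg intro!: exI[of _ 0])
  show ?thesis
  proof (rule ccontr)
    assume "\<not> sbar0 \<le> sbar"
    then have "sbar < sbar0" by simp
    with g_inc[OF R0_pos sbar_nn this sbar0_le] gsbar gsbar0 show False by simp
  qed
qed

end
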